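(* Let $n\ge 3$, let $c^1,\dots,c^n$ be pairwise distinct constants, and let $u(x^1,\dots,x^n)$ be smooth with all first derivatives $u_i$ nowhere zero. Suppose that for all pairwise distinct $i,j,k$, $$(c^i-c^j)u_ku_{ij}+(c^k-c^i)u_ju_{ik}+(c^j-c^k)u_iu_{jk}=0\quad\text{and}\quad u_{ijk}=\tfrac12\Big(\frac{u_{ij}u_{ik}}{u_i}+\frac{u_{ij}u_{jk}}{u_j}+\frac{u_{ik}u_{jk}}{u_k}\Big).$$ Then for all $i\ne j$ the planar equation $$\Big(\frac{u_{ij}^2}{u_i^2u_j}\Big)_i+\Big(\frac{u_{ij}^2}{u_iu_j^2}\Big)_j+\Big(\frac{2u_{ij}}{u_iu_j}\Big)_{ij}=0$$ holds, where outer subscripts denote partial derivatives with respect to $x^i$, $x^j$.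
   Context: Subscripts on $u$ denote partial derivatives with respect to the independent variables, e.g. $u_{ij}=\partial^2u/\partial x^i\partial x^j$. The planar equation is the first group of multiform Euler-Lagrange equations of the Lagrangian 2-form $\mathcal{L}=\sum_{i<j}(c^i-c^j)\frac{u_{ij}^2}{u_iu_j}\,\mathrm{d}x^i\wedge\mathrm{d}x^j$. *)

theory Defs
  imports "HOL-Analysis.Analysis"
begin

definition pd :: "'n::finite \<Rightarrow> (real^'n \<Rightarrow> real) \<Rightarrow> real^'n \<Rightarrow> real" where
  "pd i f x = deriv (\<lambda>t. f (x + t *\<^sub>R axis i 1)) 0"

fun iter_pd :: "'n::finite list \<Rightarrow> (real^'n \<Rightarrow> real) \<Rightarrow> real^'n \<Rightarrow> real" where
  "iter_pd [] f = f"
| "iter_pd (i # is) f = pd i (iter_pd is f)"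

definition smooth :: "(real^'n::finite \<Rightarrow> real) \<Rightarrow> bool" where
  "smooth f \<longleftrightarrow> (\<forall>is x. iter_pd is f differentiable (at x))"

end

theory Submission
  imports Defs
begin

lemma line_deriv:
  fixes f :: "'a::real_normed_vector \<Rightarrow> real"
  assumes "f differentiable (at (y + t0 *\<^sub>R v))"
  shows "((\<lambda>t. f (y + t *\<^sub>R v)) has_real_derivative frechet_derivative f (at (y + t0 *\<^sub>R v)) v) (at t0)"
proof -
  let ?F = "frechet_derivative f (at (y + t0 *\<^sub>R v))"
  have F: "(f has_derivative ?F) (at (y + t0 *\<^sub>R v))"
    using assms frechet_derivative_works by blast
  have L: "((\<lambda>t. y + t *\<^sub>R v) has_derivative (\<lambda>t. t *\<^sub>R v)) (at t0)"
    by (auto intro!: derivative_eq_intros)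
  have C: "((\<lambda>t. f (y + t *\<^sub>R v)) has_derivative (\<lambda>t. ?F (t *\<^sub>R v))) (at t0)"
    using diff_chain_at[OF L, of f ?F] F by (simp add: o_def)
  have lin: "linear ?F" using F has_derivative_linear by blast
  have "(\<lambda>t. ?F (t *\<^sub>R v)) = (\<lambda>t. ?F v * t)"
    using linear_scale[OF lin] by (auto simp: mult.commute)
  with C show ?thesis by (simp add: has_field_derivative_def)
qed

lemma pd_frechet:
  assumes "f differentiable (at y)"
  shows "pd i f y = frechet_derivative f (at y) (axis i 1)"
  unfolding pd_def
  using line_deriv[of f y 0 "axis i 1"] assms by (simp add: DERIV_imp_deriv)

lemma pd_line:
  assumes "\<forall>z. f differentiable (at z)"
  shows "((\<lambda>t. f (y + t *\<^sub>R axis i 1)) has_real_derivative pd i f (y + t0 *\<^sub>R axis i 1)) (at t0)"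
  using line_deriv[of f y t0 "axis i 1"] assms pd_frechet by metis

lemma pd_line0:
  assumes "\<forall>z. f differentiable (at z)"
  shows "((\<lambda>t. f (y + t *\<^sub>R axis i 1)) has_real_derivative pd i f y) (at 0)"
  using pd_line[OF assms, of y i 0] by simp

lemma pd_compute:
  assumes "((\<lambda>t. G (x + t *\<^sub>R axis i 1)) has_real_derivative D) (at 0)"
  shows "pd i G x = D"
  unfolding pd_def using assms by (rule DERIV_imp_deriv)

lemma smooth_diff: "smooth u \<Longrightarrow> \<forall>z. iter_pd is u differentiable (at z)"
  by (simp add: smooth_def)


lemma mixed_mvt:
  fixes f :: "real^'n::finite \<Rightarrow> real"
  assumes df: "\<forall>z. f differentiable (at z)" and dfi: "\<forall>z. pd i f differentiable (at z)" and h: "h > 0"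
  shows "\<exists>\<xi>. dist \<xi> x < 2*h \<and>
    f (x + h *\<^sub>R axis i 1 + h *\<^sub>R axis j 1) - f (x + h *\<^sub>R axis i 1) - f (x + h *\<^sub>R axis j 1) + f x
      = h * h * pd j (pd i f) \<xi>"
proof -
  define e :: "real^'n" where "e = axis i 1"
  define d :: "real^'n" where "d = axis j 1"
  define g where "g s = f ((x + h *\<^sub>R d) + s *\<^sub>R e) - f (x + s *\<^sub>R e)" for s
  define g' where "g' s = pd i f ((x + h *\<^sub>R d) + s *\<^sub>R e) - pd i f (x + s *\<^sub>R e)" for s
  have "DERIV g s :> g' s" for s
    unfolding g_def g'_def e_def
    by (intro DERIV_diff pd_line df)
  then obtain s where s: "0 < s" "s < h" "g h - g 0 = (h - 0) * g' s"
    using MVT2[OF h, of g g'] by blast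
  define k where "k \<tau> = pd i f ((x + s *\<^sub>R e) + \<tau> *\<^sub>R d)" for \<tau>
  have "DERIV k \<tau> :> pd j (pd i f) ((x + s *\<^sub>R e) + \<tau> *\<^sub>R d)" for \<tau>
    unfolding k_def d_def by (intro pd_line dfi)
  then obtain \<tau> where \<tau>: "0 < \<tau>" "\<tau> < h" "k h - k 0 = (h - 0) * pd j (pd i f) ((x + s *\<^sub>R e) + \<tau> *\<^sub>R d)"
    using MVT2[OF h, of k "\<lambda>\<tau>. pd j (pd i f) ((x + s *\<^sub>R e) + \<tau> *\<^sub>R d)"] by blast
  have gk: "g' s = k h - k 0"
    unfolding g'_def k_def by (simp add: algebra_simps)
  have gd: "g h - g 0 = f (x + h *\<^sub>R e + h *\<^sub>R d) - f (x + h *\<^sub>R e) - f (x + h *\<^sub>R d) + f x"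
    unfolding g_def by (simp add: algebra_simps)
  have "dist ((x + s *\<^sub>R e) + \<tau> *\<^sub>R d) x = norm (s *\<^sub>R e + \<tau> *\<^sub>R d)"
    by (simp add: dist_norm)
  also have "\<dots> \<le> norm (s *\<^sub>R e) + norm (\<tau> *\<^sub>R d)" by (rule norm_triangle_ineq)
  also have "\<dots> = s + \<tau>" using s \<tau> by (simp add: e_def d_def)
  also have "\<dots> < 2*h" using s \<tau> by simp
  finally have dd: "dist ((x + s *\<^sub>R e) + \<tau> *\<^sub>R d) x < 2*h" .
  show ?thesis
    apply (rule exI[of _ "(x + s *\<^sub>R e) + \<tau> *\<^sub>R d"])
    using dd s(3) \<tau>(3) gk gd unfolding e_def d_def by (simp add: algebra_simps)
qed

lemma abs_aux: "\<bar>(p::real) - A\<bar> < \<bar>B - A\<bar>/2 \<Longrightarrow> \<bar>q - B\<bar> < \<bar>B - A\<bar>/2 \<Longrightarrow> p = q \<Longrightarrow> False"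
  by (auto simp: abs_if split: if_splits)

lemma schwarz:
  fixes f :: "real^'n::finite \<Rightarrow> real"
  assumes df: "\<forall>z. f differentiable (at z)" and dfi: "\<forall>z. pd i f differentiable (at z)"
    and dfj: "\<forall>z. pd j f differentiable (at z)"
    and c1: "pd j (pd i f) differentiable (at x)" and c2: "pd i (pd j f) differentiable (at x)"
  shows "pd i (pd j f) x = pd j (pd i f) x"
proof (rule ccontr)
  assume ne: "pd i (pd j f) x \<noteq> pd j (pd i f) x"
  define \<epsilon> where "\<epsilon> = \<bar>pd i (pd j f) x - pd j (pd i f) x\<bar> / 2"
  have ep: "\<epsilon> > 0" using ne by (simp add: \<epsilon>_def)
  have cc1: "continuous (at x) (pd j (pd i f))" using c1 differentiable_imp_continuous_within by blast
  have cc2: "continuous (at x) (pd i (pd j f))" using c2 differentiable_imp_continuous_within by blast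
  obtain d1 where d1: "d1 > 0" "\<forall>x'. dist x' x < d1 \<longrightarrow> dist (pd j (pd i f) x') (pd j (pd i f) x) < \<epsilon>"
    using cc1 ep unfolding continuous_at_eps_delta by blast
  obtain d2 where d2: "d2 > 0" "\<forall>x'. dist x' x < d2 \<longrightarrow> dist (pd i (pd j f) x') (pd i (pd j f) x) < \<epsilon>"
    using cc2 ep unfolding continuous_at_eps_delta by blast
  define h where "h = min d1 d2 / 2"
  have h: "h > 0" using d1 d2 by (simp add: h_def)
  obtain \<xi>1 where x1: "dist \<xi>1 x < 2*h"
    "f (x + h *\<^sub>R axis i 1 + h *\<^sub>R axis j 1) - f (x + h *\<^sub>R axis i 1) - f (x + h *\<^sub>R axis j 1) + f x
      = h * h * pd j (pd i f) \<xi>1"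
    using mixed_mvt[OF df dfi h, of x j] by blast
  obtain \<xi>2 where x2: "dist \<xi>2 x < 2*h"
    "f (x + h *\<^sub>R axis j 1 + h *\<^sub>R axis i 1) - f (x + h *\<^sub>R axis j 1) - f (x + h *\<^sub>R axis i 1) + f x
      = h * h * pd i (pd j f) \<xi>2"
    using mixed_mvt[OF df dfj h, of x i] by blast
  have "h * h * pd j (pd i f) \<xi>1 = h * h * pd i (pd j f) \<xi>2"
    using x1(2) x2(2) by (simp add: algebra_simps)
  hence eq: "pd j (pd i f) \<xi>1 = pd i (pd j f) \<xi>2" using h by simp
  have "dist \<xi>1 x < d1" "dist \<xi>2 x < d2" using x1(1) x2(1) by (auto simp: h_def)
  hence "\<bar>pd j (pd i f) \<xi>1 - pd j (pd i f) x\<bar> < \<epsilon>" "\<bar>pd i (pd j f) \<xi>2 - pd i (pd j f) x\<bar> < \<epsilon>"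
    using d1 d2 by (auto simp: dist_real_def)
  thus False using eq unfolding \<epsilon>_def by (rule abs_aux)
qed

lemma swap:
  assumes "smooth u"
  shows "pd i (pd j (iter_pd is u)) = pd j (pd i (iter_pd is u))"
proof
  fix x
  show "pd i (pd j (iter_pd is u)) x = pd j (pd i (iter_pd is u)) x"
    apply (rule schwarz)
    using smooth_diff[OF assms, of "is"] smooth_diff[OF assms, of "i#is"] smooth_diff[OF assms, of "j#is"]
      smooth_diff[OF assms, of "j#i#is"] smooth_diff[OF assms, of "i#j#is"] by auto
qed


lemma alg_norm:
  fixes a b cc al be w x y s1 s2 t z1 z2 ti tj v :: real
  assumes d: "a \<noteq> b" "a \<noteq> cc" "b \<noteq> cc"
  and R1: "(a-b) * w + (cc-a) * x + (b-cc) * y = 0"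
  and R2: "(a-b) * (x * w + s1) + (cc-a) * (w * x + z1) + (b-cc) * (al * y + t) = 0"
  and R3: "(a-b) * (y * w + s2) + (cc-a) * (be * x + t) + (b-cc) * (w * y + z2) = 0"
  and R4: "t = 1/2 * (w * x + w * y + x * y)"
  and R5: "ti = 1/2 * (s1 * x + w * z1 - w * x * al + s1 * y + w * t - w * y * w + z1 * y + x * t - x * y * x)"
  and R6: "tj = 1/2 * (s2 * x + w * t - w * x * w + s2 * y + w * z2 - w * y * be + t * y + x * z2 - x * y * y)"
  and R7: "(a-b) * (t * w + x * s2 + y * s1 + v) + (cc-a) * (s2 * x + w * t + be * z1 + ti) + (b-cc) * (s1 * y + al * z2 + w * t + tj) = 0"
  shows "(2 * w * s1 - 2 * w^2 * al - w^3) + (2 * w * s2 - w^3 - 2 * w^2 * be)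
    + 2 * (v - s2 * al - s2 * w - (2 * w * s1 - 2 * w^2 * al - w^3) - ((s1 * be + w * s2) - w * be * al - 2 * w^2 * be)) = 0"
proof -
  define A1 where "A1 = a - b"
  define A2 where "A2 = cc - a"
  define A3 where "A3 = b - cc"
  have ab: "A1 \<noteq> 0" and ac: "A2 \<noteq> 0" and bc: "A3 \<noteq> 0" using d by (auto simp: A1_def A2_def A3_def)
  have R1': "A1 * w + A2 * x + A3 * y = 0" using R1 by (simp add: A1_def A2_def A3_def)
  have hz1: "A2 * z1 = -(A1 * (x * w+s1) + A2 * w * x + A3 * (al * y+t))"
    using R2 unfolding A1_def A2_def A3_def by (simp add: algebra_simps)
  have hz2: "A3 * z2 = -(A1 * (y * w+s2) + A2 * (be * x+t) + A3 * w * y)"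
    using R3 unfolding A1_def A2_def A3_def by (simp add: algebra_simps)
  have hti: "A2 * ti = 1/2 * (A2 * (s1 * x - w * x * al + s1 * y + w * t - w * y * w + x * t - x * y * x) + (w+y) * (A2 * z1))"
    unfolding R5 by algebra
  have htj: "A3 * tj = 1/2 * (A3 * (s2 * x + w * t - w * x * w + s2 * y - w * y * be + t * y - x * y * y) + (w+x) * (A3 * z2))"
    unfolding R6 by algebra
  have hv: "A1 * A2 * A3 * v = -(A1 * A2 * A3 * (t * w+x * s2+y * s1) + A2 * A3 * (A2 * (s2 * x+w * t) + be * (A2 * z1) + A2 * ti + A3 * (s1 * y+w * t) + al * (A3 * z2) + A3 * tj))"
    using R7 unfolding A1_def A2_def A3_def by algebra
  have hv2: "A1 * A2 * A3 * v = -(A1 * A2 * A3 * (t * w+x * s2+y * s1) + A2 * A3 * (A2 * (s2 * x+w * t) + be * (-(A1 * (x * w+s1) + A2 * w * x + A3 * (al * y+t)))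
     + 1/2 * (A2 * (s1 * x - w * x * al + s1 * y + w * t - w * y * w + x * t - x * y * x) + (w+y) * (-(A1 * (x * w+s1) + A2 * w * x + A3 * (al * y+t))))
     + A3 * (s1 * y+w * t) + al * (-(A1 * (y * w+s2) + A2 * (be * x+t) + A3 * w * y))
     + 1/2 * (A3 * (s2 * x + w * t - w * x * w + s2 * y - w * y * be + t * y - x * y * y) + (w+x) * (-(A1 * (y * w+s2) + A2 * (be * x+t) + A3 * w * y)))))"
    unfolding hv hti htj hz1 hz2 ..
  have key: "A1 * A2 * A3 * ((2 * w * s1 - 2 * w^2 * al - w^3) + (2 * w * s2 - w^3 - 2 * w^2 * be)
    + 2 * (v - s2 * al - s2 * w - (2 * w * s1 - 2 * w^2 * al - w^3) - ((s1 * be + w * s2) - w * be * al - 2 * w^2 * be)))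
    = (A1 * w + A2 * x + A3 * y) * (cc-a) * (cc-b) * (-2 * al * be + s2 + s1 - y * al - x * be - x * y - 2 * w * be - 2 * w * al)"
  proof -
    have e: "A1 * A2 * A3 * ((2 * w * s1 - 2 * w^2 * al - w^3) + (2 * w * s2 - w^3 - 2 * w^2 * be)
    + 2 * (v - s2 * al - s2 * w - (2 * w * s1 - 2 * w^2 * al - w^3) - ((s1 * be + w * s2) - w * be * al - 2 * w^2 * be)))
      = A1 * A2 * A3 * ((2 * w * s1 - 2 * w^2 * al - w^3) + (2 * w * s2 - w^3 - 2 * w^2 * be)
    + 2 * (- s2 * al - s2 * w - (2 * w * s1 - 2 * w^2 * al - w^3) - ((s1 * be + w * s2) - w * be * al - 2 * w^2 * be))) + 2 * (A1 * A2 * A3 * v)"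
      by (simp add: algebra_simps)
    show ?thesis unfolding e hv2 R4 unfolding A1_def A2_def A3_def by algebra
  qed
  show ?thesis using key R1' ab ac bc by simp
qed

lemma alg:
  fixes a b cc p q r A B W X Y S1 S2 T Z1 Z2 Ti Tj V :: real
  assumes nz: "p \<noteq> 0" "q \<noteq> 0" "r \<noteq> 0" and d: "a \<noteq> b" "a \<noteq> cc" "b \<noteq> cc"
  and R1: "(a-b) * r * W + (cc-a) * q * X + (b-cc) * p * Y = 0"
  and R2: "(a-b) * (X * W + r * S1) + (cc-a) * (W * X + q * Z1) + (b-cc) * (A * Y + p * T) = 0"
  and R3: "(a-b) * (Y * W + r * S2) + (cc-a) * (B * X + q * T) + (b-cc) * (W * Y + p * Z2) = 0"
  and R4: "T = 1/2 * (W * X/p + W * Y/q + X * Y/r)"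
  and R5: "Ti = 1/2 * ((S1 * X+W * Z1)/p - W * X * A/p^2 + (S1 * Y+W * T)/q - W * Y * W/q^2 + (Z1 * Y+X * T)/r - X * Y * X/r^2)"
  and R6: "Tj = 1/2 * ((S2 * X+W * T)/p - W * X * W/p^2 + (S2 * Y+W * Z2)/q - W * Y * B/q^2 + (T * Y+X * Z2)/r - X * Y * Y/r^2)"
  and R7: "(a-b) * (T * W + X * S2 + Y * S1 + r * V) + (cc-a) * (S2 * X + W * T + B * Z1 + q * Ti) + (b-cc) * (S1 * Y + A * Z2 + W * T + p * Tj) = 0"
  shows "(2 * W * S1/(p^2 * q) - 2 * W^2 * A/(p^3 * q) - W^3/(p^2 * q^2))
   + (2 * W * S2/(p * q^2) - W^3/(p^2 * q^2) - 2 * W^2 * B/(p * q^3))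
   + 2 * (V/(p * q) - S2 * A/(p^2 * q) - S2 * W/(p * q^2) - (2 * W * S1/(p^2 * q) - 2 * W^2 * A/(p^3 * q) - W^3/(p^2 * q^2))
        - ((S1 * B + W * S2)/(p * q^2) - W * B * A/(p^2 * q^2) - 2 * W^2 * B/(p * q^3))) = 0"
proof -
  define w where "w = W/(p * q)"
  define x where "x = X/(p * r)"
  define y where "y = Y/(q * r)"
  define al where "al = A/p^2"
  define be where "be = B/q^2"
  define s1 where "s1 = S1/(p^2 * q)"
  define s2 where "s2 = S2/(p * q^2)"
  define t where "t = T/(p * q * r)"
  define z1 where "z1 = Z1/(p^2 * r)"
  define z2 where "z2 = Z2/(q^2 * r)"
  define ti where "ti = Ti/(p^2 * q * r)"
  define tj where "tj = Tj/(p * q^2 * r)"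
  define v where "v = V/(p^2 * q^2)"
  have W: "W = w * p * q" and X: "X = x * p * r" and Y: "Y = y * q * r" and A: "A = al * p^2" and B: "B = be * q^2"
   and S1: "S1 = s1 * p^2 * q" and S2: "S2 = s2 * p * q^2" and T: "T = t * p * q * r" and Z1: "Z1 = z1 * p^2 * r"
   and Z2: "Z2 = z2 * q^2 * r" and Ti: "Ti = ti * p^2 * q * r" and Tj: "Tj = tj * p * q^2 * r" and V: "V = v * p^2 * q^2"
    using nz by (simp_all add: w_def x_def y_def al_def be_def s1_def s2_def t_def z1_def z2_def ti_def tj_def v_def)
  have r1: "(a-b) * w + (cc-a) * x + (b-cc) * y = 0"
  proof -
    have "p * q * r * ((a-b) * w + (cc-a) * x + (b-cc) * y) = 0" using R1 unfolding W X Y by (simp add: algebra_simps)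
    thus ?thesis using nz by simp
  qed
  have r2: "(a-b) * (x * w + s1) + (cc-a) * (w * x + z1) + (b-cc) * (al * y + t) = 0"
  proof -
    have "p^2 * q * r * ((a-b) * (x * w + s1) + (cc-a) * (w * x + z1) + (b-cc) * (al * y + t)) = 0" using R2 unfolding W X Y A S1 Z1 T by (simp add: algebra_simps power2_eq_square)
    thus ?thesis using nz by simp
  qed
  have r3: "(a-b) * (y * w + s2) + (cc-a) * (be * x + t) + (b-cc) * (w * y + z2) = 0"
  proof -
    have "p * q^2 * r * ((a-b) * (y * w + s2) + (cc-a) * (be * x + t) + (b-cc) * (w * y + z2)) = 0" using R3 unfolding W X Y B S2 Z2 T by (simp add: algebra_simps power2_eq_square)
    thus ?thesis using nz by simp
  qed
  have r4: "t = 1/2 * (w * x + w * y + x * y)"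
  proof -
    have "(p * q * r) * t = (p * q * r) * (1/2 * (w * x + w * y + x * y))"
      using R4 nz unfolding W X Y T by (simp add: field_simps power2_eq_square)
    thus ?thesis using nz by simp
  qed
  have r5: "ti = 1/2 * (s1 * x + w * z1 - w * x * al + s1 * y + w * t - w * y * w + z1 * y + x * t - x * y * x)"
  proof -
    have "(p^2 * q * r) * ti = (p^2 * q * r) * (1/2 * (s1 * x + w * z1 - w * x * al + s1 * y + w * t - w * y * w + z1 * y + x * t - x * y * x))"
      using R5 nz unfolding W X Y A S1 Z1 T Ti apply (simp add: field_simps power2_eq_square) by algebra
    thus ?thesis using nz by simp
  qed
  have r6: "tj = 1/2 * (s2 * x + w * t - w * x * w + s2 * y + w * z2 - w * y * be + t * y + x * z2 - x * y * y)"
  proof -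
    have "(p * q^2 * r) * tj = (p * q^2 * r) * (1/2 * (s2 * x + w * t - w * x * w + s2 * y + w * z2 - w * y * be + t * y + x * z2 - x * y * y))"
      using R6 nz unfolding W X Y B S2 Z2 T Tj apply (simp add: field_simps power2_eq_square) by algebra
    thus ?thesis using nz by simp
  qed
  have r7: "(a-b) * (t * w + x * s2 + y * s1 + v) + (cc-a) * (s2 * x + w * t + be * z1 + ti) + (b-cc) * (s1 * y + al * z2 + w * t + tj) = 0"
  proof -
    have "p^2 * q^2 * r * ((a-b) * (t * w + x * s2 + y * s1 + v) + (cc-a) * (s2 * x + w * t + be * z1 + ti) + (b-cc) * (s1 * y + al * z2 + w * t + tj)) = 0"
      using R7 unfolding W X Y A B S1 S2 Z1 Z2 T Ti Tj V by (simp add: algebra_simps power2_eq_square)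
    thus ?thesis using nz by simp
  qed
  have G: "(2 * w * s1 - 2 * w^2 * al - w^3) + (2 * w * s2 - w^3 - 2 * w^2 * be)
    + 2 * (v - s2 * al - s2 * w - (2 * w * s1 - 2 * w^2 * al - w^3) - ((s1 * be + w * s2) - w * be * al - 2 * w^2 * be)) = 0"
    by (rule alg_norm[OF d r1 r2 r3 r4 r5 r6 r7])
  have "(2 * W * S1/(p^2 * q) - 2 * W^2 * A/(p^3 * q) - W^3/(p^2 * q^2))
   + (2 * W * S2/(p * q^2) - W^3/(p^2 * q^2) - 2 * W^2 * B/(p * q^3))
   + 2 * (V/(p * q) - S2 * A/(p^2 * q) - S2 * W/(p * q^2) - (2 * W * S1/(p^2 * q) - 2 * W^2 * A/(p^3 * q) - W^3/(p^2 * q^2))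
        - ((S1 * B + W * S2)/(p * q^2) - W * B * A/(p^2 * q^2) - 2 * W^2 * B/(p * q^3)))
   = p * q * ((2 * w * s1 - 2 * w^2 * al - w^3) + (2 * w * s2 - w^3 - 2 * w^2 * be)
    + 2 * (v - s2 * al - s2 * w - (2 * w * s1 - 2 * w^2 * al - w^3) - ((s1 * be + w * s2) - w * be * al - 2 * w^2 * be)))"
    unfolding W A B S1 S2 V using nz by (simp add: field_simps power2_eq_square power3_eq_cube)
  thus ?thesis using G by simp
qed


theorem lemmaA2:
  fixes u :: "real^'n \<Rightarrow> real" and c :: "'n \<Rightarrow> real"
  assumes n3: "CARD('n) \<ge> 3"
    and distinct_c: "inj c"
    and smooth_u: "smooth u"
    and nonzero: "\<forall>i x. pd i u x \<noteq> 0"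
    and eq1: "\<forall>i j k x. i \<noteq> j \<and> i \<noteq> k \<and> j \<noteq> k \<longrightarrow>
        (c i - c j) * pd k u x * pd i (pd j u) x
      + (c k - c i) * pd j u x * pd i (pd k u) x
      + (c j - c k) * pd i u x * pd j (pd k u) x = 0"
    and eq2: "\<forall>i j k x. i \<noteq> j \<and> i \<noteq> k \<and> j \<noteq> k \<longrightarrow>
        pd i (pd j (pd k u)) x = 1/2 *
          (pd i (pd j u) x * pd i (pd k u) x / pd i u x
         + pd i (pd j u) x * pd j (pd k u) x / pd j u x
         + pd i (pd k u) x * pd j (pd k u) x / pd k u x)"
  shows "\<forall>i j x. i \<noteq> j \<longrightarrow>
      pd i (\<lambda>y. (pd i (pd j u) y)\<^sup>2 / ((pd i u y)\<^sup>2 * pd j u y)) x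
    + pd j (\<lambda>y. (pd i (pd j u) y)\<^sup>2 / (pd i u y * (pd j u y)\<^sup>2)) x
    + pd i (pd j (\<lambda>y. 2 * pd i (pd j u) y / (pd i u y * pd j u y))) x = 0"
proof (intro allI impI)
  fix i j :: 'n and x :: "real^'n"
  assume ij: "i \<noteq> j"
  have "card {i, j} \<le> 2" by (simp add: card_insert_if)
  hence "{i, j} \<noteq> (UNIV :: 'n set)" using n3 by auto
  then obtain k where k: "k \<noteq> i" "k \<noteq> j" by blast
  have d0: "\<And>z. u differentiable (at z)" using smooth_diff[OF smooth_u, of "[]"] by simp
  have d1: "\<And>a z. pd a u differentiable (at z)" using smooth_diff[OF smooth_u, of "[a]" for a] by simp
  have d2: "\<And>a b z. pd a (pd b u) differentiable (at z)" using smooth_diff[OF smooth_u, of "[a,b]" for a b] by simp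
  have d3: "\<And>a b c z. pd a (pd b (pd c u)) differentiable (at z)" using smooth_diff[OF smooth_u, of "[a,b,c]" for a b c] by simp
  have d4: "\<And>a b c d z. pd a (pd b (pd c (pd d u))) differentiable (at z)" using smooth_diff[OF smooth_u, of "[a,b,c,d]" for a b c d] by simp
  have pnz: "\<And>y. pd i u y \<noteq> 0" "\<And>y. pd j u y \<noteq> 0" "\<And>y. pd k u y \<noteq> 0" using nonzero by auto
  have cne: "c i \<noteq> c j" "c i \<noteq> c k" "c j \<noteq> c k" using distinct_c ij k by (auto simp: inj_eq)
  have sw1: "pd j (pd i u) = pd i (pd j u)" using swap[OF smooth_u, of j i "[]"] by simp
  have sw2: "pd j (pd i (pd k u)) = pd i (pd j (pd k u))" using swap[OF smooth_u, of j i "[k]"] by simp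
  have sw3: "pd i (pd j (pd i (pd j u))) = pd j (pd i (pd i (pd j u)))" using swap[OF smooth_u, of i j "[i,j]"] by simp
  have sw4: "pd i (pd j (pd j u)) = pd j (pd i (pd j u))" using swap[OF smooth_u, of i j "[j]"] by simp
  have sw5: "pd j (pd i (pd i (pd k u))) = pd i (pd i (pd j (pd k u)))"
    using swap[OF smooth_u, of j i "[i,k]"] sw2 by simp
  have sw6: "pd j (pd i (pd i u)) = pd i (pd i (pd j u))"
    using swap[OF smooth_u, of j i "[i]"] sw1 by simp
  have zero: "pd m (\<lambda>y. 0) y = 0" for m y
    by (rule pd_compute) simp
  have E1: "(\<lambda>y. (c i - c j) * pd k u y * pd i (pd j u) y + (c k - c i) * pd j u y * pd i (pd k u) y
      + (c j - c k) * pd i u y * pd j (pd k u) y) = (\<lambda>y. 0)"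
    using eq1 ij k by auto
  have E2: "pd i (pd j (pd k u)) = (\<lambda>y. 1/2 * (pd i (pd j u) y * pd i (pd k u) y / pd i u y
         + pd i (pd j u) y * pd j (pd k u) y / pd j u y + pd i (pd k u) y * pd j (pd k u) y / pd k u y))"
    using eq2 ij k by auto
  have R2f: "(\<lambda>y. (c i - c j)*(pd i (pd k u) y*pd i (pd j u) y + pd k u y*pd i (pd i (pd j u)) y)
      + (c k - c i)*(pd i (pd j u) y*pd i (pd k u) y + pd j u y*pd i (pd i (pd k u)) y)
      + (c j - c k)*(pd i (pd i u) y*pd j (pd k u) y + pd i u y*pd i (pd j (pd k u)) y)) = (\<lambda>y. 0)"
  proof
    fix y
    have "pd i (\<lambda>y. (c i - c j) * pd k u y * pd i (pd j u) y + (c k - c i) * pd j u y * pd i (pd k u) y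
      + (c j - c k) * pd i u y * pd j (pd k u) y) y = (c i - c j)*(pd i (pd k u) y*pd i (pd j u) y + pd k u y*pd i (pd i (pd j u)) y)
      + (c k - c i)*(pd i (pd j u) y*pd i (pd k u) y + pd j u y*pd i (pd i (pd k u)) y)
      + (c j - c k)*(pd i (pd i u) y*pd j (pd k u) y + pd i u y*pd i (pd j (pd k u)) y)"
      apply (rule pd_compute)
      apply (rule derivative_eq_intros pd_line0 allI d0 d1 d2 d3 d4 | simp add: pnz)+
      by (auto simp: algebra_simps)
    then show "(c i - c j)*(pd i (pd k u) y*pd i (pd j u) y + pd k u y*pd i (pd i (pd j u)) y)
      + (c k - c i)*(pd i (pd j u) y*pd i (pd k u) y + pd j u y*pd i (pd i (pd k u)) y)
      + (c j - c k)*(pd i (pd i u) y*pd j (pd k u) y + pd i u y*pd i (pd j (pd k u)) y) = 0"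
      unfolding E1 zero by simp
  qed
  have R3: "(c i - c j)*(pd j (pd k u) x*pd i (pd j u) x + pd k u x*pd j (pd i (pd j u)) x)
      + (c k - c i)*(pd j (pd j u) x*pd i (pd k u) x + pd j u x*pd i (pd j (pd k u)) x)
      + (c j - c k)*(pd i (pd j u) x*pd j (pd k u) x + pd i u x*pd j (pd j (pd k u)) x) = 0"
  proof -
    have "pd j (\<lambda>y. (c i - c j) * pd k u y * pd i (pd j u) y + (c k - c i) * pd j u y * pd i (pd k u) y
      + (c j - c k) * pd i u y * pd j (pd k u) y) x = (c i - c j)*(pd j (pd k u) x*pd i (pd j u) x + pd k u x*pd j (pd i (pd j u)) x)
      + (c k - c i)*(pd j (pd j u) x*pd i (pd k u) x + pd j u x*pd i (pd j (pd k u)) x)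
      + (c j - c k)*(pd i (pd j u) x*pd j (pd k u) x + pd i u x*pd j (pd j (pd k u)) x)"
      apply (rule pd_compute)
      apply (rule derivative_eq_intros pd_line0 allI d0 d1 d2 d3 d4 | simp add: pnz)+
      by (auto simp: algebra_simps sw1 sw2)
    then show ?thesis unfolding E1 zero by simp
  qed
  have R4: "pd i (pd j (pd k u)) x = 1/2 * (pd i (pd j u) x * pd i (pd k u) x / pd i u x
         + pd i (pd j u) x * pd j (pd k u) x / pd j u x + pd i (pd k u) x * pd j (pd k u) x / pd k u x)"
    using eq2 ij k by auto
  have R5: "pd i (pd i (pd j (pd k u))) x = 1/2*((pd i (pd i (pd j u)) x*pd i (pd k u) x+pd i (pd j u) x*pd i (pd i (pd k u)) x)/pd i u x
     - pd i (pd j u) x*pd i (pd k u) x*pd i (pd i u) x/(pd i u x)^2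
     + (pd i (pd i (pd j u)) x*pd j (pd k u) x+pd i (pd j u) x*pd i (pd j (pd k u)) x)/pd j u x
     - pd i (pd j u) x*pd j (pd k u) x*pd i (pd j u) x/(pd j u x)^2
     + (pd i (pd i (pd k u)) x*pd j (pd k u) x+pd i (pd k u) x*pd i (pd j (pd k u)) x)/pd k u x
     - pd i (pd k u) x*pd j (pd k u) x*pd i (pd k u) x/(pd k u x)^2)"
  proof -
    have "pd i (pd i (pd j (pd k u))) x = pd i (\<lambda>y. 1/2 * (pd i (pd j u) y * pd i (pd k u) y / pd i u y
         + pd i (pd j u) y * pd j (pd k u) y / pd j u y + pd i (pd k u) y * pd j (pd k u) y / pd k u y)) x"
      by (simp only: E2)
    also have "\<dots> = 1/2*((pd i (pd i (pd j u)) x*pd i (pd k u) x+pd i (pd j u) x*pd i (pd i (pd k u)) x)/pd i u x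
     - pd i (pd j u) x*pd i (pd k u) x*pd i (pd i u) x/(pd i u x)^2
     + (pd i (pd i (pd j u)) x*pd j (pd k u) x+pd i (pd j u) x*pd i (pd j (pd k u)) x)/pd j u x
     - pd i (pd j u) x*pd j (pd k u) x*pd i (pd j u) x/(pd j u x)^2
     + (pd i (pd i (pd k u)) x*pd j (pd k u) x+pd i (pd k u) x*pd i (pd j (pd k u)) x)/pd k u x
     - pd i (pd k u) x*pd j (pd k u) x*pd i (pd k u) x/(pd k u x)^2)"
      apply (rule pd_compute)
      apply (rule derivative_eq_intros pd_line0 allI d0 d1 d2 d3 d4 | simp add: pnz)+
      using pnz by (auto simp: field_simps power2_eq_square)
    finally show ?thesis .
  qed
  have R6: "pd j (pd i (pd j (pd k u))) x = 1/2*((pd j (pd i (pd j u)) x*pd i (pd k u) x+pd i (pd j u) x*pd i (pd j (pd k u)) x)/pd i u x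
     - pd i (pd j u) x*pd i (pd k u) x*pd i (pd j u) x/(pd i u x)^2
     + (pd j (pd i (pd j u)) x*pd j (pd k u) x+pd i (pd j u) x*pd j (pd j (pd k u)) x)/pd j u x
     - pd i (pd j u) x*pd j (pd k u) x*pd j (pd j u) x/(pd j u x)^2
     + (pd i (pd j (pd k u)) x*pd j (pd k u) x+pd i (pd k u) x*pd j (pd j (pd k u)) x)/pd k u x
     - pd i (pd k u) x*pd j (pd k u) x*pd j (pd k u) x/(pd k u x)^2)"
  proof -
    have "pd j (pd i (pd j (pd k u))) x = pd j (\<lambda>y. 1/2 * (pd i (pd j u) y * pd i (pd k u) y / pd i u y
         + pd i (pd j u) y * pd j (pd k u) y / pd j u y + pd i (pd k u) y * pd j (pd k u) y / pd k u y)) x"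
      by (simp only: E2)
    also have "\<dots> = 1/2*((pd j (pd i (pd j u)) x*pd i (pd k u) x+pd i (pd j u) x*pd i (pd j (pd k u)) x)/pd i u x
     - pd i (pd j u) x*pd i (pd k u) x*pd i (pd j u) x/(pd i u x)^2
     + (pd j (pd i (pd j u)) x*pd j (pd k u) x+pd i (pd j u) x*pd j (pd j (pd k u)) x)/pd j u x
     - pd i (pd j u) x*pd j (pd k u) x*pd j (pd j u) x/(pd j u x)^2
     + (pd i (pd j (pd k u)) x*pd j (pd k u) x+pd i (pd k u) x*pd j (pd j (pd k u)) x)/pd k u x
     - pd i (pd k u) x*pd j (pd k u) x*pd j (pd k u) x/(pd k u x)^2)"
      apply (rule pd_compute)
      apply (rule derivative_eq_intros pd_line0 allI d0 d1 d2 d3 d4 | simp add: pnz)+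
      using pnz by (auto simp: field_simps power2_eq_square sw1 sw2)
    finally show ?thesis .
  qed
  have R7: "(c i - c j)*(pd i (pd j (pd k u)) x*pd i (pd j u) x + pd i (pd k u) x*pd j (pd i (pd j u)) x
        + pd j (pd k u) x*pd i (pd i (pd j u)) x + pd k u x*pd j (pd i (pd i (pd j u))) x)
      + (c k - c i)*(pd j (pd i (pd j u)) x*pd i (pd k u) x + pd i (pd j u) x*pd i (pd j (pd k u)) x
        + pd j (pd j u) x*pd i (pd i (pd k u)) x + pd j u x*pd i (pd i (pd j (pd k u))) x)
      + (c j - c k)*(pd i (pd i (pd j u)) x*pd j (pd k u) x + pd i (pd i u) x*pd j (pd j (pd k u)) x
        + pd i (pd j u) x*pd i (pd j (pd k u)) x + pd i u x*pd j (pd i (pd j (pd k u))) x) = 0"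
  proof -
    have "pd j (\<lambda>y. (c i - c j)*(pd i (pd k u) y*pd i (pd j u) y + pd k u y*pd i (pd i (pd j u)) y)
      + (c k - c i)*(pd i (pd j u) y*pd i (pd k u) y + pd j u y*pd i (pd i (pd k u)) y)
      + (c j - c k)*(pd i (pd i u) y*pd j (pd k u) y + pd i u y*pd i (pd j (pd k u)) y)) x =
      (c i - c j)*(pd i (pd j (pd k u)) x*pd i (pd j u) x + pd i (pd k u) x*pd j (pd i (pd j u)) x
        + pd j (pd k u) x*pd i (pd i (pd j u)) x + pd k u x*pd j (pd i (pd i (pd j u))) x)
      + (c k - c i)*(pd j (pd i (pd j u)) x*pd i (pd k u) x + pd i (pd j u) x*pd i (pd j (pd k u)) x
        + pd j (pd j u) x*pd i (pd i (pd k u)) x + pd j u x*pd i (pd i (pd j (pd k u))) x)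
      + (c j - c k)*(pd i (pd i (pd j u)) x*pd j (pd k u) x + pd i (pd i u) x*pd j (pd j (pd k u)) x
        + pd i (pd j u) x*pd i (pd j (pd k u)) x + pd i u x*pd j (pd i (pd j (pd k u))) x)"
      apply (rule pd_compute)
      apply (rule derivative_eq_intros pd_line0 allI d0 d1 d2 d3 d4 | simp add: pnz)+
      by (auto simp: algebra_simps sw1 sw2 sw5 sw6)
    then show ?thesis unfolding R2f zero by simp
  qed
  have R1x: "(c i - c j) * pd k u x * pd i (pd j u) x + (c k - c i) * pd j u x * pd i (pd k u) x
      + (c j - c k) * pd i u x * pd j (pd k u) x = 0" using fun_cong[OF E1, of x] by simp
  have R2x: "(c i - c j)*(pd i (pd k u) x*pd i (pd j u) x + pd k u x*pd i (pd i (pd j u)) x)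
      + (c k - c i)*(pd i (pd j u) x*pd i (pd k u) x + pd j u x*pd i (pd i (pd k u)) x)
      + (c j - c k)*(pd i (pd i u) x*pd j (pd k u) x + pd i u x*pd i (pd j (pd k u)) x) = 0"
    using fun_cong[OF R2f, of x] by simp
  have t1: "pd i (\<lambda>y. (pd i (pd j u) y)\<^sup>2 / ((pd i u y)\<^sup>2 * pd j u y)) x =
    2*pd i (pd j u) x*pd i (pd i (pd j u)) x/((pd i u x)^2*pd j u x) - 2*(pd i (pd j u) x)^2*pd i (pd i u) x/((pd i u x)^3*pd j u x) - (pd i (pd j u) x)^3/((pd i u x)^2*(pd j u x)^2)"
    apply (rule pd_compute)
    apply (rule derivative_eq_intros pd_line0 allI d0 d1 d2 d3 d4 | simp add: pnz)+
    using pnz by (auto simp: field_simps power2_eq_square power3_eq_cube)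
  have t2: "pd j (\<lambda>y. (pd i (pd j u) y)\<^sup>2 / (pd i u y * (pd j u y)\<^sup>2)) x =
    2*pd i (pd j u) x*pd j (pd i (pd j u)) x/(pd i u x*(pd j u x)^2) - (pd i (pd j u) x)^3/((pd i u x)^2*(pd j u x)^2) - 2*(pd i (pd j u) x)^2*pd j (pd j u) x/(pd i u x*(pd j u x)^3)"
    apply (rule pd_compute)
    apply (rule derivative_eq_intros pd_line0 allI d0 d1 d2 d3 d4 | simp add: pnz)+
    using pnz by (auto simp: field_simps power2_eq_square power3_eq_cube sw1)
  have Nj: "pd j (\<lambda>y. 2 * pd i (pd j u) y / (pd i u y * pd j u y)) =
    (\<lambda>y. 2*(pd j (pd i (pd j u)) y/(pd i u y*pd j u y) - (pd i (pd j u) y)^2/((pd i u y)^2*pd j u y) - pd i (pd j u) y*pd j (pd j u) y/(pd i u y*(pd j u y)^2)))"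
  proof
    fix y
    show "pd j (\<lambda>y. 2 * pd i (pd j u) y / (pd i u y * pd j u y)) y =
      2*(pd j (pd i (pd j u)) y/(pd i u y*pd j u y) - (pd i (pd j u) y)^2/((pd i u y)^2*pd j u y) - pd i (pd j u) y*pd j (pd j u) y/(pd i u y*(pd j u y)^2))"
    apply (rule pd_compute)
    apply (rule derivative_eq_intros pd_line0 allI d0 d1 d2 d3 d4 | simp add: pnz)+
    using pnz by (auto simp: field_simps power2_eq_square power3_eq_cube sw1)
  qed
  have t3: "pd i (pd j (\<lambda>y. 2 * pd i (pd j u) y / (pd i u y * pd j u y))) x =
    2*(pd j (pd i (pd i (pd j u))) x/(pd i u x*pd j u x) - pd j (pd i (pd j u)) x*pd i (pd i u) x/((pd i u x)^2*pd j u x)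
      - pd j (pd i (pd j u)) x*pd i (pd j u) x/(pd i u x*(pd j u x)^2)
      - (2*pd i (pd j u) x*pd i (pd i (pd j u)) x/((pd i u x)^2*pd j u x) - 2*(pd i (pd j u) x)^2*pd i (pd i u) x/((pd i u x)^3*pd j u x) - (pd i (pd j u) x)^3/((pd i u x)^2*(pd j u x)^2))
      - ((pd i (pd i (pd j u)) x*pd j (pd j u) x + pd i (pd j u) x*pd j (pd i (pd j u)) x)/(pd i u x*(pd j u x)^2)
         - pd i (pd j u) x*pd j (pd j u) x*pd i (pd i u) x/((pd i u x)^2*(pd j u x)^2) - 2*(pd i (pd j u) x)^2*pd j (pd j u) x/(pd i u x*(pd j u x)^3)))"
    unfolding Nj
    apply (rule pd_compute)
    apply (rule derivative_eq_intros pd_line0 allI d0 d1 d2 d3 d4 | simp add: pnz)+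
    using pnz by (auto simp: field_simps power2_eq_square power3_eq_cube sw3 sw4)
  show "pd i (\<lambda>y. (pd i (pd j u) y)\<^sup>2 / ((pd i u y)\<^sup>2 * pd j u y)) x
    + pd j (\<lambda>y. (pd i (pd j u) y)\<^sup>2 / (pd i u y * (pd j u y)\<^sup>2)) x
    + pd i (pd j (\<lambda>y. 2 * pd i (pd j u) y / (pd i u y * pd j u y))) x = 0"
    unfolding t1 t2 t3
    by (rule alg[OF pnz(1)[of x] pnz(2)[of x] pnz(3)[of x] cne R1x R2x R3 R4 R5 R6 R7])
qed

end
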